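(* Let $k \ge 2$ be an integer. Then for all but finitely many positive integers $N$, there is a connected graph $G$ with $\mathrm{SW}_k(G)=N$.
   Context: For a connected graph $G$ and a subset $S \subset V(G)$, the Steiner distance $d(S)$ is the smallest number of edges in a connected subgraph of $G$ whose vertex set contains $S$. For an integer $k\ge 2$, the Steiner--Wiener $k$ index of $G$ is $\mathrm{SW}_k(G)=\sum_{S \subset V(G),\ |S|=k} d(S)$. *)

theory Defs
  imports Main
begin

definition simple_graph :: "'a set \<Rightarrow> 'a set set \<Rightarrow> bool" where
  "simple_graph V E \<longleftrightarrow> finite V \<and> (\<forall>e\<in>E. e \<subseteq> V \<and> card e = 2)"

definition adj_rel :: "'a set set \<Rightarrow> ('a \<times> 'a) set" where
  "adj_rel E = {(u, v). {u, v} \<in> E}"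

definition connected_graph :: "'a set \<Rightarrow> 'a set set \<Rightarrow> bool" where
  "connected_graph W F \<longleftrightarrow> W \<noteq> {} \<and> (\<forall>u\<in>W. \<forall>v\<in>W. (u, v) \<in> (adj_rel F)\<^sup>*)"

definition steiner_dist :: "'a set \<Rightarrow> 'a set set \<Rightarrow> 'a set \<Rightarrow> nat" where
  "steiner_dist V E S = (LEAST m. \<exists>W F. S \<subseteq> W \<and> W \<subseteq> V \<and> F \<subseteq> E \<and>
       (\<forall>e\<in>F. e \<subseteq> W) \<and> connected_graph W F \<and> card F = m)"

definition steiner_wiener :: "nat \<Rightarrow> 'a set \<Rightarrow> 'a set set \<Rightarrow> nat" where
  "steiner_wiener k V E = (\<Sum>S\<in>{S. S \<subseteq> V \<and> card S = k}. steiner_dist V E S)"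

end

theory Submission
  imports Defs Complex_Main "HOL.Binomial_Plus"
begin

lemma conn_card:
  assumes conn: "connected_graph W F" and fW: "finite W" and fF: "finite F"
  shows "card W \<le> card F + 1"
proof -
  let ?R = "adj_rel F"
  from conn obtain r where r: "r \<in> W" unfolding connected_graph_def by blast
  have reach: "\<And>v. v \<in> W \<Longrightarrow> (v, r) \<in> ?R\<^sup>*"
    using conn r unfolding connected_graph_def by blast
  define dist where "dist v = (LEAST j. (v, r) \<in> ?R ^^ j)" for v
  have dist_ex: "(v, r) \<in> ?R ^^ dist v" if "v \<in> W" for v
  proof -
    from reach[OF that] obtain j where "(v, r) \<in> ?R ^^ j" using rtrancl_power by blast
    then show ?thesis unfolding dist_def by (rule LeastI)
  qed
  have dist_le: "dist v \<le> j" if "(v, r) \<in> ?R ^^ j" for v j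
    unfolding dist_def using that by (rule Least_le)
  define nxt where "nxt v = (SOME w. (v, w) \<in> ?R \<and> (w, r) \<in> ?R ^^ (dist v - 1))" for v
  have nxt: "(v, nxt v) \<in> ?R \<and> dist (nxt v) < dist v" if "v \<in> W - {r}" for v
  proof -
    have d: "(v, r) \<in> ?R ^^ dist v" using dist_ex that by blast
    have "dist v \<noteq> 0"
    proof
      assume "dist v = 0"
      with d have "v = r" by simp
      with that show False by simp
    qed
    then obtain j where j: "dist v = Suc j" by (cases "dist v") auto
    have "\<exists>w. (v, w) \<in> ?R \<and> (w, r) \<in> ?R ^^ (dist v - 1)"
      using relpow_Suc_D2[of v r j ?R] d j by simp
    then have "(v, nxt v) \<in> ?R \<and> (nxt v, r) \<in> ?R ^^ (dist v - 1)"
      unfolding nxt_def by (rule someI_ex)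
    then show ?thesis using dist_le j by fastforce
  qed
  define g where "g v = {v, nxt v}" for v
  have inj: "inj_on g (W - {r})"
  proof (rule inj_onI)
    fix x y assume x: "x \<in> W - {r}" and y: "y \<in> W - {r}" and e: "g x = g y"
    show "x = y"
    proof (rule ccontr)
      assume "x \<noteq> y"
      with e have h1: "x = nxt y" and h2: "y = nxt x" unfolding g_def by (auto simp: doubleton_eq_iff)
      have "dist (nxt y) < dist y" "dist (nxt x) < dist x" using nxt[OF x] nxt[OF y] by auto
      then have "dist x < dist y" "dist y < dist x" by (simp_all only: h1[symmetric] h2[symmetric])
      then show False by simp
    qed
  qed
  have sub: "g ` (W - {r}) \<subseteq> F"
    using nxt unfolding g_def adj_rel_def by auto
  have "card (W - {r}) \<le> card F"
    using card_inj_on_le[OF inj sub fF] .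
  then show ?thesis using r fW by (simp add: card_Diff_singleton)
qed


definition gE :: "(nat \<Rightarrow> nat) \<Rightarrow> nat \<Rightarrow> nat set set" where
  "gE r n = {{w, v} | w v. w < v \<and> v < n \<and> r v \<le> w}"

lemma gE_sub: "gE r n \<subseteq> Pow {0..<n}"
  unfolding gE_def by auto

lemma finite_gE: "finite (gE r n)"
  using gE_sub by (rule finite_subset) simp

lemma gE_mem: "{a, b} \<in> gE r n \<Longrightarrow> a < n \<and> b < n \<and> ((a < b \<and> r b \<le> a) \<or> (b < a \<and> r a \<le> b))"
  unfolding gE_def by (auto simp: doubleton_eq_iff)

lemma simple_gE: "simple_graph {0..<n} (gE r n)"
  unfolding simple_graph_def gE_def by (auto simp: card_2_iff)

lemma connected_gE:
  assumes "0 < n" "r (n - 1) = 0"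
  shows "connected_graph {0..<n} (gE r n)"
proof -
  have e: "(v, n - 1) \<in> adj_rel (gE r n) \<and> (n - 1, v) \<in> adj_rel (gE r n)" if "v < n - 1" for v
  proof -
    have "{v, n - 1} \<in> gE r n" unfolding gE_def using that assms by force
    then show ?thesis unfolding adj_rel_def by (auto simp: insert_commute)
  qed
  have "(v, n - 1) \<in> (adj_rel (gE r n))\<^sup>* \<and> (n - 1, v) \<in> (adj_rel (gE r n))\<^sup>*" if "v < n" for v
  proof (cases "v = n - 1")
    case True then show ?thesis by simp
  next
    case False then have "v < n - 1" using that by simp
    then show ?thesis using e by blast
  qed
  note h = this
  show ?thesis unfolding connected_graph_def
  proof (intro conjI ballI)
    show "{0..<n} \<noteq> {}" using assms by simp
    fix u v assume "u \<in> {0..<n}" "v \<in> {0..<n}"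
    then show "(u, v) \<in> (adj_rel (gE r n))\<^sup>*" using h[of u] h[of v] by (meson atLeastLessThan_iff rtrancl_trans)
  qed
qed


lemma sd_gE:
  assumes n0: "0 < n" and rlast: "r (n - 1) = 0" and rle: "\<And>v. r v \<le> v"
    and nest: "\<And>m v. r m \<le> v \<Longrightarrow> v \<le> m \<Longrightarrow> r m \<le> r v"
    and k2: "2 \<le> k" and S: "S \<subseteq> {0..<n}" and cS: "card S = k"
  shows "steiner_dist {0..<n} (gE r n) S = (if r (Max S) \<le> Min S then k - 1 else k)"
proof -
  let ?V = "{0..<n}" and ?E = "gE r n"
  define P where "P m = (\<exists>W F. S \<subseteq> W \<and> W \<subseteq> ?V \<and> F \<subseteq> ?E \<and>
       (\<forall>e\<in>F. e \<subseteq> W) \<and> connected_graph W F \<and> card F = m)" for m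
  have fS: "finite S" and neS: "S \<noteq> {}" using cS k2 card_ge_0_finite[of S] by auto
  define m where "m = Max S"
  have mS: "m \<in> S" unfolding m_def using fS neS by simp
  have mn: "m < n" using mS S by auto
  have lt_m: "x < m" if "x \<in> S" "x \<noteq> m" for x
    using that fS unfolding m_def by (meson Max_ge le_neq_implies_less)
  have minle: "Min S \<le> x" if "x \<in> S" for x using that fS by simp
  have lower: "k - 1 \<le> c" if "P c" for c
  proof -
    from that obtain W F where W: "S \<subseteq> W" "W \<subseteq> ?V" "F \<subseteq> ?E" "\<forall>e\<in>F. e \<subseteq> W"
      "connected_graph W F" "card F = c" unfolding P_def by blast
    have fW: "finite W" using W(2) finite_subset by blast
    have fF: "finite F" using W(3) finite_gE finite_subset by blast
    have "card W \<le> card F + 1" by (rule conn_card[OF W(5) fW fF])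
    moreover have "card S \<le> card W" by (rule card_mono[OF fW W(1)])
    ultimately show ?thesis using W(6) cS by linarith
  qed
  have lower2: "c \<noteq> k - 1" if "P c" "\<not> r m \<le> Min S" for c
  proof
    assume ck: "c = k - 1"
    from that obtain W F where W: "S \<subseteq> W" "W \<subseteq> ?V" "F \<subseteq> ?E" "\<forall>e\<in>F. e \<subseteq> W"
      "connected_graph W F" "card F = c" unfolding P_def by blast
    have fW: "finite W" using W(2) finite_subset by blast
    have fF: "finite F" using W(3) finite_gE finite_subset by blast
    have "card W \<le> card F + 1" by (rule conn_card[OF W(5) fW fF])
    then have "card W \<le> k" using W(6) ck k2 by linarith
    moreover have "card S \<le> card W" by (rule card_mono[OF fW W(1)])
    ultimately have "card S = card W" using cS by linarith
    then have WS: "W = S" using card_subset_eq[OF fW W(1)] by simp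
    have inv: "r m \<le> y \<and> y \<in> S" if "(x, y) \<in> (adj_rel F)\<^sup>*" "r m \<le> x" "x \<in> S" for x y
      using that(1)
    proof (induction rule: rtrancl_induct)
      case base then show ?case using that by simp
    next
      case (step y z)
      from step.hyps(2) have yzF: "{y, z} \<in> F" unfolding adj_rel_def by simp
      then have zS: "z \<in> S" and yzE: "{y, z} \<in> ?E" using W(3,4) WS by auto
      have ylm: "y \<le> m" using step.IH lt_m by fastforce
      have "r m \<le> r y" using nest step.IH ylm by blast
      show ?case
      proof (rule ccontr)
        assume "\<not> (r m \<le> z \<and> z \<in> S)"
        then have "z < r m" using zS by simp
        then have "z < y" using step.IH by simp
        then have "r y \<le> z" using gE_mem[OF yzE] by simp
        with \<open>r m \<le> r y\<close> \<open>z < r m\<close> show False by simp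
      qed
    qed
    have "(m, Min S) \<in> (adj_rel F)\<^sup>*" using W(5) WS mS fS neS unfolding connected_graph_def by simp
    then have "r m \<le> Min S" using inv rle mS by blast
    with that(2) show False by simp
  qed
  show ?thesis
  proof (cases "r m \<le> Min S")
    case True
    define F where "F = (\<lambda>x. {x, m}) ` (S - {m})"
    have "P (k - 1)" unfolding P_def
    proof (intro exI conjI)
      show "S \<subseteq> S" "S \<subseteq> ?V" using S by auto
      show "F \<subseteq> ?E"
      proof
        fix e assume "e \<in> F"
        then obtain x where x: "x \<in> S" "x \<noteq> m" "e = {x, m}" unfolding F_def by auto
        have "x < m" using lt_m x by simp
        moreover have "r m \<le> x" using True minle x by fastforce
        ultimately show "e \<in> ?E" unfolding gE_def using x mn by blast
      qed
      show "\<forall>e\<in>F. e \<subseteq> S" unfolding F_def using mS by auto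
      have "inj_on (\<lambda>x. {x, m}) (S - {m})" by (rule inj_onI) (auto simp: doubleton_eq_iff)
      then have "card F = card (S - {m})" unfolding F_def by (rule card_image)
      then show "card F = k - 1" using cS mS fS by (simp add: card_Diff_singleton)
      have e: "(x, m) \<in> (adj_rel F)\<^sup>* \<and> (m, x) \<in> (adj_rel F)\<^sup>*" if "x \<in> S" for x
      proof (cases "x = m")
        case False
        then have "{x, m} \<in> F" "{m, x} \<in> F" unfolding F_def using that by (auto simp: insert_commute)
        then show ?thesis unfolding adj_rel_def by auto
      qed simp
      show "connected_graph S F" unfolding connected_graph_def
        using neS e by (meson rtrancl_trans)
    qed
    then have "steiner_dist ?V ?E S = k - 1"
      unfolding steiner_dist_def P_def[symmetric]
      by (rule Least_equality) (use lower in auto)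
    then show ?thesis using True m_def by simp
  next
    case False
    define u where "u = n - 1"
    have uS: "u \<notin> S"
    proof
      assume "u \<in> S"
      then have "u \<le> m" using fS unfolding m_def by simp
      then have "m = u" using mn u_def by simp
      then show False using False rlast u_def by simp
    qed
    define F where "F = (\<lambda>x. {x, u}) ` S"
    have "P k" unfolding P_def
    proof (intro exI conjI)
      show "S \<subseteq> insert u S" by auto
      show "insert u S \<subseteq> ?V" using S n0 u_def by auto
      show "F \<subseteq> ?E"
      proof
        fix e assume "e \<in> F"
        then obtain x where x: "x \<in> S" "e = {x, u}" unfolding F_def by auto
        have "x \<noteq> u" using x(1) uS by auto
        moreover have "x < n" using x(1) S by auto
        ultimately have xu: "x < u" unfolding u_def by simp
        have un: "u < n" unfolding u_def using n0 by simp
        have ru: "r u \<le> x" using rlast unfolding u_def by simp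
        have "{x, u} \<in> ?E" unfolding gE_def using xu un ru by blast
        then show "e \<in> ?E" using x(2) by simp
      qed
      show "\<forall>e\<in>F. e \<subseteq> insert u S" unfolding F_def by auto
      have "inj_on (\<lambda>x. {x, u}) S" using uS by (intro inj_onI) (auto simp: doubleton_eq_iff)
      then show "card F = k" unfolding F_def using card_image cS by metis
      have e: "(x, u) \<in> (adj_rel F)\<^sup>* \<and> (u, x) \<in> (adj_rel F)\<^sup>*" if "x \<in> insert u S" for x
      proof (cases "x = u")
        case False
        then have "{x, u} \<in> F" "{u, x} \<in> F" unfolding F_def using that by (auto simp: insert_commute)
        then show ?thesis unfolding adj_rel_def by auto
      qed simp
      show "connected_graph (insert u S) F" unfolding connected_graph_def
        using e by (meson rtrancl_trans insert_not_empty)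
    qed
    then have "steiner_dist ?V ?E S = k"
      unfolding steiner_dist_def P_def[symmetric]
      apply (rule Least_equality)
      using lower lower2 False by fastforce
    then show ?thesis using False m_def by simp
  qed
qed


lemma good_count:
  assumes rle: "\<And>v. r v \<le> v" and k2: "2 \<le> k"
  shows "card {S. S \<subseteq> {0..<n} \<and> card S = k \<and> r (Max S) \<le> Min S} = (\<Sum>m<n. (m - r m) choose (k - 1))"
proof -
  define T where "T m = {A. A \<subseteq> {r m..<m} \<and> card A = k - 1}" for m
  define G where "G m = insert m ` T m" for m
  have eq: "{S. S \<subseteq> {0..<n} \<and> card S = k \<and> r (Max S) \<le> Min S} = (\<Union>m\<in>{..<n}. G m)"
  proof (rule set_eqI, rule iffI)
    fix S assume "S \<in> {S. S \<subseteq> {0..<n} \<and> card S = k \<and> r (Max S) \<le> Min S}"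
    then have S: "S \<subseteq> {0..<n}" "card S = k" "r (Max S) \<le> Min S" by auto
    have fS: "finite S" and neS: "S \<noteq> {}" using S k2 card_ge_0_finite[of S] by auto
    define m where "m = Max S"
    have mS: "m \<in> S" unfolding m_def using fS neS by simp
    have "S - {m} \<in> T m" unfolding T_def
    proof (intro CollectI conjI)
      show "S - {m} \<subseteq> {r m..<m}"
      proof
        fix x assume x: "x \<in> S - {m}"
        then have "x < m" using fS unfolding m_def by (metis DiffE Max_ge insertCI le_neq_implies_less)
        moreover have "r m \<le> x" using S(3) x fS m_def by (metis DiffD1 Min_le order_trans)
        ultimately show "x \<in> {r m..<m}" by simp
      qed
      show "card (S - {m}) = k - 1" using S mS fS by (simp add: card_Diff_singleton)
    qed
    then have "S \<in> G m" unfolding G_def using mS by (metis image_eqI insert_Diff)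
    moreover have "m < n" using mS S by auto
    ultimately show "S \<in> (\<Union>m\<in>{..<n}. G m)" by auto
  next
    fix S assume "S \<in> (\<Union>m\<in>{..<n}. G m)"
    then obtain m A where m: "m < n" and A: "A \<subseteq> {r m..<m}" "card A = k - 1" and SA: "S = insert m A"
      unfolding G_def T_def by auto
    have fA: "finite A" using A(1) finite_subset by blast
    have mA: "m \<notin> A" using A(1) by auto
    have "S \<subseteq> {0..<n}" using SA A m by auto
    moreover have "card S = k" using SA fA mA A k2 by simp
    moreover have "Max S = m" using SA fA A(1) by (intro Max_eqI) auto
    moreover have "r m \<le> Min S" using SA fA A(1) rle by (subst Min_ge_iff) auto
    ultimately show "S \<in> {S. S \<subseteq> {0..<n} \<and> card S = k \<and> r (Max S) \<le> Min S}" by simp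
  qed
  have fG: "finite (G m)" for m unfolding G_def T_def by auto
  have disj: "\<forall>i\<in>{..<n}. \<forall>j\<in>{..<n}. i \<noteq> j \<longrightarrow> G i \<inter> G j = {}"
  proof (intro ballI impI)
    fix i j :: nat assume "i \<noteq> j"
    have mx: "Max S = m" if "S \<in> G m" for S m
    proof -
      from that obtain A where A: "A \<subseteq> {r m..<m}" and SA: "S = insert m A" unfolding G_def T_def by auto
      have "finite A" using A finite_subset by blast
      then show ?thesis using SA A by (intro Max_eqI) auto
    qed
    show "G i \<inter> G j = {}" using mx \<open>i \<noteq> j\<close> by blast
  qed
  have cG: "card (G m) = (m - r m) choose (k - 1)" for m
  proof -
    have "inj_on (insert m) (T m)"
    proof (rule inj_onI)
      fix A B assume "A \<in> T m" "B \<in> T m" "insert m A = insert m B"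
      then have "m \<notin> A" "m \<notin> B" "insert m A = insert m B" unfolding T_def by auto
      then have "insert m A - {m} = insert m B - {m}" by simp
      then show "A = B" using \<open>m \<notin> A\<close> \<open>m \<notin> B\<close> by simp
    qed
    then have "card (G m) = card (T m)" unfolding G_def by (rule card_image)
    also have "\<dots> = card {r m..<m} choose (k - 1)" unfolding T_def by (rule n_subsets) simp
    finally show ?thesis by simp
  qed
  have "card (\<Union>m\<in>{..<n}. G m) = (\<Sum>m<n. card (G m))"
    by (rule card_UN_disjoint) (use fG disj in auto)
  then show ?thesis unfolding eq using cG by simp
qed

lemma sw_gE:
  assumes n0: "0 < n" and rlast: "r (n - 1) = 0" and rle: "\<And>v. r v \<le> v"
    and nest: "\<And>m v. r m \<le> v \<Longrightarrow> v \<le> m \<Longrightarrow> r m \<le> r v"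
    and k2: "2 \<le> k"
  shows "steiner_wiener k {0..<n} (gE r n) + (\<Sum>m<n. (m - r m) choose (k - 1)) = k * (n choose k)"
proof -
  define Sk where "Sk = {S. S \<subseteq> {0..<n} \<and> card S = k}"
  have fSk: "finite Sk" unfolding Sk_def by auto
  have each: "steiner_dist {0..<n} (gE r n) S + (if r (Max S) \<le> Min S then 1 else 0) = k" if "S \<in> Sk" for S
    using sd_gE[OF n0 rlast rle nest k2] that k2 unfolding Sk_def by auto
  have "steiner_wiener k {0..<n} (gE r n) + (\<Sum>S\<in>Sk. (if r (Max S) \<le> Min S then 1 else 0))
        = (\<Sum>S\<in>Sk. k)"
    unfolding steiner_wiener_def Sk_def[symmetric] sum.distrib[symmetric] using each by (rule sum.cong[OF refl])
  also have "\<dots> = k * (n choose k)" unfolding Sk_def using n_subsets[of "{0..<n}" k] by simp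
  finally have 1: "steiner_wiener k {0..<n} (gE r n) + (\<Sum>S\<in>Sk. (if r (Max S) \<le> Min S then 1 else 0)) = k * (n choose k)" .
  have "(\<Sum>S\<in>Sk. (if r (Max S) \<le> Min S then 1 else 0)) = card {S\<in>Sk. r (Max S) \<le> Min S}"
    using fSk by (simp add: sum.If_cases Int_def)
  also have "{S\<in>Sk. r (Max S) \<le> Min S} = {S. S \<subseteq> {0..<n} \<and> card S = k \<and> r (Max S) \<le> Min S}"
    unfolding Sk_def by auto
  also have "card \<dots> = (\<Sum>m<n. (m - r m) choose (k - 1))" by (rule good_count[OF rle k2])
  finally show ?thesis using 1 by simp
qed


definition Us :: "nat \<Rightarrow> nat \<Rightarrow> nat set" where
  "Us k t = (\<lambda>j. j * k + (k - 1)) ` {..<t}"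

definition rr :: "nat \<Rightarrow> nat \<Rightarrow> nat \<Rightarrow> nat \<Rightarrow> nat set \<Rightarrow> nat \<Rightarrow> nat" where
  "rr k U b t P v = (if v < k * U then (if v \<in> Us k t then v - (k - 1) else v)
      else if v < k * U + b then (if v - k * U \<in> P then k * U else v) else 0)"

lemma us_gap:
  fixes j j' k :: nat
  assumes "0 < k" "j * k \<le> j' * k + (k - 1)" "j' * k + (k - 1) < j * k + (k - 1)"
  shows False
proof -
  from assms(3) have "j' < j" by simp
  then have "(j' + 1) * k \<le> j * k" by (intro mult_le_mono1) simp
  with assms show False by (simp add: algebra_simps)
qed

lemma rr_props:
  assumes k2: "2 \<le> k"
  shows "rr k U b t P v \<le> v"
    and "rr k U b t P (k * U + b) = 0"
    and "rr k U b t P m \<le> v \<Longrightarrow> v \<le> m \<Longrightarrow> rr k U b t P m \<le> rr k U b t P v"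
proof -
  show "rr k U b t P v \<le> v" unfolding rr_def by auto
  show "rr k U b t P (k * U + b) = 0" unfolding rr_def by auto
  assume a: "rr k U b t P m \<le> v" "v \<le> m"
  show "rr k U b t P m \<le> rr k U b t P v"
  proof (cases "m < k * U \<and> m \<in> Us k t")
    case True
    then obtain j where j: "m = j * k + (k - 1)" unfolding Us_def by auto
    have rm: "rr k U b t P m = j * k" using True j unfolding rr_def by simp
    have vl: "v < k * U" using a True by simp
    show ?thesis
    proof (cases "v = m")
      case False
      have "v \<notin> Us k t"
      proof
        assume "v \<in> Us k t"
        then obtain j' where j': "v = j' * k + (k - 1)" unfolding Us_def by auto
        show False using us_gap[of k j j'] a rm j j' False k2 by simp
      qed
      then show ?thesis using vl a rm unfolding rr_def by simp
    qed simp
  next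
    case False
    then show ?thesis using a unfolding rr_def by (auto split: if_splits)
  qed
qed

lemma rr_sum:
  assumes k2: "2 \<le> k" and tU: "t \<le> U" and Pb: "P \<subseteq> {..<b}"
  shows "(\<Sum>m<k * U + b + 1. (m - rr k U b t P m) choose (k - 1))
       = t + (\<Sum>p\<in>P. p choose (k - 1)) + ((k * U + b) choose (k - 1))"
proof -
  let ?f = "\<lambda>m. (m - rr k U b t P m) choose (k - 1)"
  have s1: "(\<Sum>m<k * U + b + 1. ?f m) = (\<Sum>m\<in>{0..<k * U}. ?f m) + (\<Sum>m\<in>{k * U..<k * U + b}. ?f m) + ?f (k * U + b)"
    by (simp add: atLeast0LessThan[symmetric] sum.atLeastLessThan_concat)
  have UsU: "Us k t \<subseteq> {0..<k * U}"
  proof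
    fix x assume "x \<in> Us k t"
    then obtain j where j: "j < t" "x = j * k + (k - 1)" unfolding Us_def by auto
    have "(j + 1) * k \<le> U * k" using j tU by (intro mult_le_mono1) simp
    then show "x \<in> {0..<k * U}" using j k2 by (simp add: algebra_simps)
  qed
  have inj: "inj_on (\<lambda>j. j * k + (k - 1)) {..<t}"
  proof (rule inj_onI)
    fix x y assume "x * k + (k - 1) = y * k + (k - 1)"
    then have "x * k = y * k" by (simp only: add_right_cancel)
    then show "x = y" using k2 by simp
  qed
  have cUs: "card (Us k t) = t"
    unfolding Us_def using card_image[OF inj] by simp
  have a: "?f m = (if m \<in> Us k t then 1 else 0)" if "m \<in> {0..<k * U}" for m
  proof (cases "m \<in> Us k t")
    case True
    then obtain j where "m = j * k + (k - 1)" unfolding Us_def by auto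
    then show ?thesis using True that unfolding rr_def by simp
  next
    case False then show ?thesis using that k2 unfolding rr_def by simp
  qed
  have s2: "(\<Sum>m\<in>{0..<k * U}. ?f m) = t"
  proof -
    have "(\<Sum>m\<in>{0..<k * U}. ?f m) = (\<Sum>m\<in>{0..<k * U}. if m \<in> Us k t then 1 else 0)"
      using a by (rule sum.cong[OF refl])
    also have "\<dots> = card ({0..<k * U} \<inter> Us k t)" by (simp add: sum.If_cases)
    also have "{0..<k * U} \<inter> Us k t = Us k t" using UsU by blast
    finally show ?thesis using cUs by simp
  qed
  have s3: "(\<Sum>m\<in>{k * U..<k * U + b}. ?f m) = (\<Sum>p\<in>P. p choose (k - 1))"
  proof -
    have "(\<Sum>m\<in>{k * U..<k * U + b}. ?f m) = (\<Sum>p\<in>{0..<b}. ?f (p + k * U))"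
      using sum.shift_bounds_nat_ivl[of ?f 0 "k * U" b] by (simp add: add.commute)
    also have "\<dots> = (\<Sum>p\<in>{0..<b}. if p \<in> P then p choose (k - 1) else 0)"
      using k2 by (intro sum.cong refl) (auto simp: rr_def)
    also have "\<dots> = (\<Sum>p\<in>{0..<b} \<inter> P. p choose (k - 1))" by (simp add: sum.If_cases)
    also have "{0..<b} \<inter> P = P" using Pb by auto
    finally show ?thesis .
  qed
  have s4: "?f (k * U + b) = (k * U + b) choose (k - 1)" unfolding rr_def by simp
  show ?thesis using s1 s2 s3 s4 by simp
qed

lemma construction:
  assumes k2: "2 \<le> k" and tU: "t \<le> U" and Pb: "P \<subseteq> {..<b}"
  shows "\<exists>(V :: nat set) E. simple_graph V E \<and> connected_graph V E \<and>
           steiner_wiener k V E + (t + (\<Sum>p\<in>P. p choose (k - 1)) + ((k * U + b) choose (k - 1)))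
             = k * ((k * U + b + 1) choose k)"
proof (intro exI conjI)
  let ?n = "k * U + b + 1" and ?r = "rr k U b t P"
  show "simple_graph {0..<?n} (gE ?r ?n)" by (rule simple_gE)
  show "connected_graph {0..<?n} (gE ?r ?n)" by (rule connected_gE) (use rr_props[OF k2] in auto)
  have "steiner_wiener k {0..<?n} (gE ?r ?n) + (\<Sum>m<?n. (m - ?r m) choose (k - 1)) = k * (?n choose k)"
    by (rule sw_gE) (use rr_props[OF k2] k2 in auto)
  then show "steiner_wiener k {0..<?n} (gE ?r ?n) + (t + (\<Sum>p\<in>P. p choose (k - 1)) + ((k * U + b) choose (k - 1)))
             = k * (?n choose k)" using rr_sum[OF k2 tU Pb] by simp
qed


lemma slack_repr:
  assumes k1: "1 \<le> k" and hU: "\<And>p. p choose (k - 1) \<le> U + (p choose k)"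
  shows "X \<le> (b choose k) + U \<Longrightarrow> \<exists>P t. P \<subseteq> {..<b} \<and> t \<le> U \<and> X = t + (\<Sum>p\<in>P. p choose (k - 1))"
proof (induction b arbitrary: X)
  case 0
  have h: "0 choose k = 0" using k1 by (intro binomial_eq_0) simp
  show ?case by (intro exI[of _ "{}"] exI[of _ X]) (use 0 h in simp)
next
  case (Suc b)
  obtain k' where k': "k = Suc k'" using k1 by (cases k) auto
  have pas: "Suc b choose k = (b choose (k - 1)) + (b choose k)" using k' by simp
  show ?case
  proof (cases "b choose (k - 1) \<le> X")
    case True
    then have "X - (b choose (k - 1)) \<le> (b choose k) + U" using Suc.prems pas by simp
    from Suc.IH[OF this] obtain P t where Pt: "P \<subseteq> {..<b}" "t \<le> U"
      "X - (b choose (k - 1)) = t + (\<Sum>p\<in>P. p choose (k - 1))" by blast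
    have bP: "b \<notin> P" using Pt(1) by auto
    have fP: "finite P" using Pt(1) finite_subset by blast
    show ?thesis
    proof (intro exI conjI)
      show "insert b P \<subseteq> {..<Suc b}" using Pt(1) by auto
      show "t \<le> U" by fact
      have "(\<Sum>p\<in>insert b P. p choose (k - 1)) = (b choose (k - 1)) + (\<Sum>p\<in>P. p choose (k - 1))"
        using fP bP by (rule sum.insert)
      then show "X = t + (\<Sum>p\<in>insert b P. p choose (k - 1))"
        using Pt(3) True by linarith
    qed
  next
    case False
    then have "X \<le> (b choose k) + U" using hU[of b] by simp
    from Suc.IH[OF this] obtain P t where Pt: "P \<subseteq> {..<b}" "t \<le> U"
      "X = t + (\<Sum>p\<in>P. p choose (k - 1))" by blast
    show ?thesis
    proof (intro exI conjI)
      show "P \<subseteq> {..<Suc b}" using Pt(1) by auto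
      show "t \<le> U" by fact
      show "X = t + (\<Sum>p\<in>P. p choose (k - 1))" by fact
    qed
  qed
qed

lemma U_bound:
  assumes k2: "2 \<le> k"
  shows "p choose (k - 1) \<le> 4 ^ k + (p choose k)"
proof (cases "2 * k \<le> p")
  case True
  then have "p choose (k - 1) \<le> p choose k" by (intro binomial_mono) auto
  then show ?thesis by simp
next
  case False
  have "p choose (k - 1) \<le> 2 ^ p" by (rule binomial_le_pow2)
  also have "\<dots> \<le> 2 ^ (2 * k)" using False by (intro power_increasing) auto
  also have "\<dots> = 4 ^ k" by (simp add: power_mult)
  finally show ?thesis by simp
qed

lemma pow_le_choose:
  assumes "1 \<le> k" "k \<le> n"
  shows "n ^ k \<le> k ^ k * (n choose k)"
proof -
  have "(real n / real k) ^ k \<le> real (n choose k)" using assms(2) by (rule binomial_ge_n_over_k_pow_k[where 'a=real])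
  then have "real n ^ k / real k ^ k \<le> real (n choose k)" by (simp add: power_divide)
  then have "real n ^ k \<le> real k ^ k * real (n choose k)" using assms
    by (simp add: divide_le_eq mult.commute)
  then have "real (n ^ k) \<le> real (k ^ k * (n choose k))" by simp
  then show ?thesis by (simp only: of_nat_le_iff)
qed

lemma key_ineq:
  assumes k2: "2 \<le> k" and bD: "D \<le> b" and bk: "k ^ (k + 1) * 2 ^ k \<le> b"
  shows "k * ((b + D) choose (k - 1)) \<le> (b + 1) choose k"
proof -
  have kk: "k \<le> k ^ (k + 1) * 2 ^ k"
  proof -
    have "k \<le> k ^ (k + 1)" using k2 by (intro self_le_power) auto
    also have "\<dots> \<le> k ^ (k + 1) * 2 ^ k" by simp
    finally show ?thesis .
  qed
  have c1: "(b + 1) ^ k \<le> k ^ k * ((b + 1) choose k)"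
    using pow_le_choose[of k "b + 1"] k2 kk bk by simp
  have c2: "(b + D) choose (k - 1) \<le> (b + D) ^ (k - 1)"
  proof (cases "k - 1 \<le> b + D")
    case True then show ?thesis by (rule binomial_le_pow)
  next
    case False then show ?thesis by (simp add: binomial_eq_0)
  qed
  have c3: "(b + D) ^ (k - 1) \<le> (2 * (b + 1)) ^ (k - 1)" using bD by (intro power_mono) auto
  have c4: "k ^ (k + 1) * 2 ^ (k - 1) \<le> b + 1"
  proof -
    have "2 ^ (k - 1) \<le> (2::nat) ^ k" by (intro power_increasing) auto
    then have "k ^ (k + 1) * 2 ^ (k - 1) \<le> k ^ (k + 1) * 2 ^ k" by simp
    then show ?thesis using bk by linarith
  qed
  have "k ^ k * (k * ((b + D) choose (k - 1))) \<le> k ^ (k + 1) * (b + D) ^ (k - 1)"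
    using c2 by (simp add: mult.assoc)
  also have "\<dots> \<le> k ^ (k + 1) * ((2 * (b + 1)) ^ (k - 1))" using c3 by simp
  also have "\<dots> = (k ^ (k + 1) * 2 ^ (k - 1)) * (b + 1) ^ (k - 1)" by (simp only: power_mult_distrib mult.assoc)
  also have "\<dots> \<le> (b + 1) * (b + 1) ^ (k - 1)" using c4 by (intro mult_right_mono) auto
  also have "\<dots> = (b + 1) ^ Suc (k - 1)" by (simp only: power_Suc)
  also have "\<dots> = (b + 1) ^ k" using k2 by (simp del: power_Suc)
  also have "\<dots> \<le> k ^ k * ((b + 1) choose k)" by (rule c1)
  finally have "k ^ k * (k * ((b + D) choose (k - 1))) \<le> k ^ k * ((b + 1) choose k)" .
  moreover have "0 < k ^ k" using k2 by simp
  ultimately show ?thesis by (rule mult_left_le_imp_le)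
qed


theorem theorem1p1:
  fixes k :: nat
  assumes "k \<ge> 2"
  shows "finite {N :: nat. N > 0 \<and>
           \<not> (\<exists>(V :: nat set) E. simple_graph V E \<and> connected_graph V E \<and>
                 steiner_wiener k V E = N)}"
proof -
  have k2: "2 \<le> k" using assms .
  define U :: nat where "U = 4 ^ k"
  define D where "D = k * U + 1"
  define b0 where "b0 = D + k ^ (k + 1) * 2 ^ k"
  define Gf where "Gf b = k * ((k * U + b + 1) choose k) - ((k * U + b) choose (k - 1))" for b
  define Ach where "Ach N = (\<exists>(V :: nat set) E. simple_graph V E \<and> connected_graph V E \<and>
                 steiner_wiener k V E = N)" for N
  have ach: "Ach (Gf b - Y)" if Y: "Y \<le> (b choose k) + U" for b Y
  proof -
    obtain P t where Pt: "P \<subseteq> {..<b}" "t \<le> U" "Y = t + (\<Sum>p\<in>P. p choose (k - 1))"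
      using slack_repr[of k U Y b] U_bound[OF k2] Y k2 unfolding U_def by auto
    from construction[OF k2 Pt(2) Pt(1)] obtain V :: "nat set" and E where
      VE: "simple_graph V E" "connected_graph V E"
      "steiner_wiener k V E + (t + (\<Sum>p\<in>P. p choose (k - 1)) + ((k * U + b) choose (k - 1)))
             = k * ((k * U + b + 1) choose k)" by blast
    have "steiner_wiener k V E = Gf b - Y" using VE(3) Pt(3) unfolding Gf_def by simp
    then show ?thesis unfolding Ach_def using VE(1,2) by blast
  qed
  have growth: "Gf (b + 1) \<le> Gf b + ((b + 1) choose k) + U + 1" if b: "b0 \<le> b" for b
  proof -
    define n where "n = k * U + b + 1"
    obtain k' where k': "k = Suc (Suc k')" using k2 by (metis add_2_eq_Suc le_Suc_ex)
    have pas: "Suc n choose k = (n choose (k - 1)) + (n choose k)" using k' by simp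
    have mon: "(n - 1) choose (k - 1) \<le> n choose (k - 1)"
      using k' unfolding n_def by simp
    have key: "k * (n choose (k - 1)) \<le> (b + 1) choose k"
      using key_ineq[OF k2, of D b] b unfolding b0_def n_def D_def by (simp add: add.commute)
    have g1: "Gf (b + 1) = k * (Suc n choose k) - (n choose (k - 1))" unfolding Gf_def n_def by simp
    have g0: "Gf b = k * (n choose k) - ((n - 1) choose (k - 1))" unfolding Gf_def n_def by simp
    have ar: "x + y - B \<le> (x - B') + y" if "B' \<le> B" for x y B B' :: nat
      using that by linarith
    have "Gf (b + 1) \<le> Gf b + k * (n choose (k - 1))"
      unfolding g1 g0 pas add_mult_distrib2 using ar[OF mon, of "k * (n choose k)" "k * (n choose (k - 1))"] by (simp add: add.commute)
    then show ?thesis using key by simp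
  qed
  define L0 where "L0 = Gf b0 - ((b0 choose k) + U)"
  have chain: "\<forall>N. L0 \<le> N \<and> N \<le> Gf (b0 + j) \<longrightarrow> Ach N" for j
  proof (induction j)
    case 0
    show ?case
    proof (intro allI impI)
      fix N assume N: "L0 \<le> N \<and> N \<le> Gf (b0 + 0)"
      have "N = Gf b0 - (Gf b0 - N)" using N by simp
      moreover have "Gf b0 - N \<le> (b0 choose k) + U" using N unfolding L0_def by linarith
      ultimately show "Ach N" using ach by metis
    qed
  next
    case (Suc j)
    show ?case
    proof (intro allI impI)
      fix N assume N: "L0 \<le> N \<and> N \<le> Gf (b0 + Suc j)"
      show "Ach N"
      proof (cases "N \<le> Gf (b0 + j)")
        case True then show ?thesis using Suc.IH N by blast
      next
        case False
        have gr: "Gf (b0 + j + 1) \<le> Gf (b0 + j) + ((b0 + j + 1) choose k) + U + 1"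
          by (rule growth) simp
        have "N = Gf (b0 + j + 1) - (Gf (b0 + j + 1) - N)" using N by simp
        moreover have "Gf (b0 + j + 1) - N \<le> ((b0 + j + 1) choose k) + U" using False gr by simp
        ultimately show ?thesis using ach by metis
      qed
    qed
  qed
  have big: "N < Gf (b0 + k ^ k * N)" for N
  proof -
    define b where "b = b0 + k ^ k * N"
    define n where "n = k * U + b + 1"
    obtain k' where k': "k = Suc k'" using k2 by (cases k) auto
    have "(n - 1) choose (k - 1) \<le> n choose k" unfolding n_def using k' by simp
    moreover have "Gf b = k * (n choose k) - ((n - 1) choose (k - 1))" unfolding Gf_def n_def by simp
    moreover have "2 * (n choose k) \<le> k * (n choose k)" using k2 by (rule mult_le_mono1)
    ultimately have "n choose k \<le> Gf b" by linarith
    moreover have "n ^ k \<le> k ^ k * (n choose k)"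
    proof (rule pow_le_choose)
      show "1 \<le> k" using k2 by simp
      have "1 \<le> U" unfolding U_def by simp
      then have "k \<le> k * U" by simp
      then show "k \<le> n" unfolding n_def by linarith
    qed
    moreover have "n \<le> n ^ k" using k2 n_def by (simp add: self_le_power)
    moreover have "k ^ k * N < n" unfolding n_def b_def by simp
    ultimately have "k ^ k * N < k ^ k * Gf b"
      by (meson le_less_trans less_le_trans mult_le_mono2)
    then show ?thesis unfolding b_def by simp
  qed
  have "{N :: nat. N > 0 \<and> \<not> Ach N} \<subseteq> {..<L0}"
  proof
    fix N assume "N \<in> {N :: nat. N > 0 \<and> \<not> Ach N}"
    then have nA: "\<not> Ach N" by simp
    show "N \<in> {..<L0}"
    proof (rule ccontr)
      assume "N \<notin> {..<L0}"
      then have "L0 \<le> N" by simp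
      with chain[of "k ^ k * N"] big[of N] have "Ach N" by auto
      with nA show False by simp
    qed
  qed
  then have "finite {N :: nat. N > 0 \<and> \<not> Ach N}" using finite_subset by blast
  then show ?thesis unfolding Ach_def by simp
qed

end
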